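(* Let $0\le\lambda<\gamma\le\delta$ and let $\mathfrak{f}=\mathfrak{s}+\overline{\mathfrak{t}}\in\mathcal{R}_H^0(\gamma,\delta,\lambda)$. Let $$ps(r)=(\delta+2\gamma-\lambda)r^2+(-2\delta-4\gamma+2\lambda)r+\delta+\gamma.$$ Then $ps(r)=0$ has a unique real root $r_s$ in $(0,1)$, and $\mathfrak{f}$ is fully starlike in $|z|<r_s$.
   Context: Let $\mathcal{U}=\{z\in\mathbb{C}:|z|<1\}$. $\mathcal{H}^0$ denotes the class of complex-valued harmonic functions $\mathfrak{f}=\mathfrak{s}+\overline{\mathfrak{t}}$ on $\mathcal{U}$, where $\mathfrak{s}(z)=z+\sum_{m\ge2}a_mz^m$ and $\mathfrak{t}(z)=\sum_{m\ge2}b_mz^m$ are analytic in $\mathcal{U}$. For real $0\le\lambda<\gamma\le\delta$, $\mathcal{R}_H^0(\gamma,\delta,\lambda)$ is the class of $\mathfrak{f}=\mathfrak{s}+\overline{\mathfrak{t}}\in\mathcal{H}^0$ such that for all $z\in\mathcal{U}$, $\mathrm{Re}\left[\gamma\mathfrak{s}'(z)+\delta z\mathfrak{s}''(z)+\frac{\delta-\gamma}{2}z^2\mathfrak{s}'''(z)-\lambda\right]>\left|\gamma\mathfrak{t}'(z)+\delta z\mathfrak{t}''(z)+\frac{\delta-\gamma}{2}z^2\mathfrak{t}'''(z)\right|$. A harmonic function $\mathfrak{f}$ with $\mathfrak{f}(0)=0$ is fully starlike in the disk $|z|<R$ if it maps every circle $|z|=\rho$, $0<\rho<R$, in a one-to-one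 manner onto a curve that bounds a domain starlike with respect to the origin. *)

theory Defs
  imports "HOL-Analysis.Analysis"
begin

definition in_RH0 :: "real \<Rightarrow> real \<Rightarrow> real \<Rightarrow> (complex \<Rightarrow> complex) \<Rightarrow> (complex \<Rightarrow> complex) \<Rightarrow> bool" where
  "in_RH0 \<gamma> \<delta> lam s t \<longleftrightarrow>
     s holomorphic_on ball 0 1 \<and> t holomorphic_on ball 0 1 \<and>
     s 0 = 0 \<and> deriv s 0 = 1 \<and> t 0 = 0 \<and> deriv t 0 = 0 \<and>
     (\<forall>z\<in>ball 0 1.
        Re (of_real \<gamma> * deriv s z + of_real \<delta> * z * (deriv ^^ 2) s z
            + of_real ((\<delta> - \<gamma>) / 2) * z^2 * (deriv ^^ 3) s z - of_real lam)
        > cmod (of_real \<gamma> * deriv t z + of_real \<delta> * z * (deriv ^^ 2) t z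
            + of_real ((\<delta> - \<gamma>) / 2) * z^2 * (deriv ^^ 3) t z))"

definition fully_starlike_in :: "(complex \<Rightarrow> complex) \<Rightarrow> real \<Rightarrow> bool" where
  "fully_starlike_in f R \<longleftrightarrow> f 0 = 0 \<and>
     (\<forall>\<rho>. 0 < \<rho> \<and> \<rho> < R \<longrightarrow>
        inj_on f (sphere 0 \<rho>) \<and>
        (\<exists>D. open D \<and> connected D \<and> bounded D \<and> frontier D = f ` sphere 0 \<rho> \<and>
             0 \<in> D \<and> (\<forall>w\<in>D. closed_segment 0 w \<subseteq> D)))"

end

theory Submission
  imports Defs "HOL-Complex_Analysis.Complex_Analysis"
begin

lemma carath_rho:
  fixes P :: "complex \<Rightarrow> complex"
  assumes hol: "P holomorphic_on ball 0 1" and pos: "\<And>z. z \<in> ball 0 1 \<Longrightarrow> Re (P z) > 0"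
    and n: "n \<ge> 1" and r: "0 < r" "r < 1"
  shows "r ^ n * norm ((deriv ^^ n) P 0 / fact n) \<le> 2 * Re (P 0)"
proof -
  define D where "D = (deriv ^^ n) P 0"
  have holr: "P holomorphic_on ball 0 r" using hol r by (auto intro: holomorphic_on_subset)
  have contr: "continuous_on (cball 0 r) P"
    using hol r by (intro holomorphic_on_imp_continuous_on holomorphic_on_subset[OF hol]) auto
  have pi2: "0 < 2 * pi" by simp
  have I1: "((\<lambda>u. P u / (u - 0) ^ Suc n) has_contour_integral ((2 * pi * \<i>) / fact n * D)) (circlepath 0 r)"
    unfolding D_def by (rule Cauchy_has_contour_integral_higher_derivative_circlepath[OF contr holr]) (use r in simp)
  hence "((\<lambda>t. P (0 + r * cis t) / (0 + r * cis t - 0) ^ Suc n * r * \<i> * cis t) has_integral ((2 * pi * \<i>) / fact n * D)) {0..2*pi}"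
    unfolding circlepath_def by (subst (asm) has_contour_integral_part_circlepath_iff[OF pi2])
  hence "((\<lambda>t. (r^n / \<i>) * (P (0 + r * cis t) / (0 + r * cis t - 0) ^ Suc n * r * \<i> * cis t)) has_integral ((r^n / \<i>) * ((2 * pi * \<i>) / fact n * D))) {0..2*pi}"
    by (rule has_integral_mult_right)
  moreover have "(\<lambda>t. (r^n / \<i>) * (P (0 + r * cis t) / (0 + r * cis t - 0) ^ Suc n * r * \<i> * cis t)) = (\<lambda>t. P (r * cis t) * cis (- (real n * t)))"
  proof
    fix t
    have e: "cis (- (real n * t)) = inverse (cis t ^ n)" by (simp add: Complex.DeMoivre)
    show "(r^n / \<i>) * (P (0 + r * cis t) / (0 + r * cis t - 0) ^ Suc n * r * \<i> * cis t) = P (r * cis t) * cis (- (real n * t))"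
      unfolding e using r by (simp add: field_simps power_mult_distrib cis_neq_zero)
  qed
  ultimately have J1: "((\<lambda>t. P (r * cis t) * cis (- (real n * t))) has_integral (2 * pi * r^n * D / fact n)) {0..2*pi}"
    by (simp add: field_simps)
  have "((\<lambda>u. P u * u ^ (n - 1)) has_contour_integral 0) (circlepath 0 r)"
    using r by (intro Cauchy_theorem_disc_simple[of _ 0 1]) (auto intro!: holomorphic_intros hol)
  hence "((\<lambda>t. P (0 + r * cis t) * (0 + r * cis t) ^ (n - 1) * r * \<i> * cis t) has_integral 0) {0..2*pi}"
    unfolding circlepath_def by (subst (asm) has_contour_integral_part_circlepath_iff[OF pi2])
  from has_integral_mult_right[OF this, of "1 / (\<i> * r ^ n)"] have "((\<lambda>t. (1 / (\<i> * r ^ n)) * (P (0 + r * cis t) * (0 + r * cis t) ^ (n - 1) * r * \<i> * cis t)) has_integral 0) {0..2*pi}"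
    by simp
  moreover have "(\<lambda>t. (1 / (\<i> * r ^ n)) * (P (0 + r * cis t) * (0 + r * cis t) ^ (n - 1) * r * \<i> * cis t)) = (\<lambda>t. P (r * cis t) * cis (real n * t))"
  proof
    fix t
    have "(r * cis t) ^ (n - 1) * r * cis t = (r * cis t) ^ n" using n
      by (metis Suc_diff_le diff_Suc_1 mult.assoc power_Suc2)
    also have "\<dots> = r ^ n * cis t ^ n" by (simp only: power_mult_distrib of_real_power)
    also have "cis t ^ n = cis (real n * t)" by (rule Complex.DeMoivre)
    finally show "(1 / (\<i> * r ^ n)) * (P (0 + r * cis t) * (0 + r * cis t) ^ (n - 1) * r * \<i> * cis t) = P (r * cis t) * cis (real n * t)"
      using r by (simp add: field_simps)
  qed
  ultimately have J2: "((\<lambda>t. P (r * cis t) * cis (real n * t)) has_integral 0) {0..2*pi}" by simp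
  hence J2c: "((\<lambda>t. cnj (P (r * cis t)) * cis (- (real n * t))) has_integral 0) {0..2*pi}"
    using has_integral_cnj[of "\<lambda>t. P (r * cis t) * cis (real n * t)" 0 "{0..2*pi}"]
    by (simp add: o_def cis_cnj)
  have J3: "((\<lambda>t. of_real (2 * Re (P (r * cis t))) * cis (- (real n * t))) has_integral (2 * pi * r^n * D / fact n)) {0..2*pi}"
  proof -
    have "(\<lambda>t. P (r * cis t) * cis (- (real n * t)) + cnj (P (r * cis t)) * cis (- (real n * t)))
        = (\<lambda>t. of_real (2 * Re (P (r * cis t))) * cis (- (real n * t)))"
    proof
      fix t
      have "P (r * cis t) + cnj (P (r * cis t)) = of_real (2 * Re (P (r * cis t)))"
        by (simp add: complex_add_cnj)
      thus "P (r * cis t) * cis (- (real n * t)) + cnj (P (r * cis t)) * cis (- (real n * t))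
        = of_real (2 * Re (P (r * cis t))) * cis (- (real n * t))"
        by (metis distrib_right)
    qed
    thus ?thesis using has_integral_add[OF J1 J2c] by simp
  qed
  have "((\<lambda>u. P u / (u - 0) ^ Suc 0) has_contour_integral ((2 * pi * \<i>) / fact 0 * (deriv ^^ 0) P 0)) (circlepath 0 r)"
    by (rule Cauchy_has_contour_integral_higher_derivative_circlepath[OF contr holr]) (use r in simp)
  hence "((\<lambda>t. P (0 + r * cis t) / (0 + r * cis t - 0) ^ Suc 0 * r * \<i> * cis t) has_integral (2 * pi * \<i> * P 0)) {0..2*pi}"
    unfolding circlepath_def by (subst (asm) has_contour_integral_part_circlepath_iff[OF pi2]) simp
  moreover have "(\<lambda>t. P (0 + r * cis t) / (0 + r * cis t - 0) ^ Suc 0 * r * \<i> * cis t) = (\<lambda>t. \<i> * P (r * cis t))"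
    using r by (auto simp: field_simps cis_neq_zero)
  ultimately have "((\<lambda>t. \<i> * P (r * cis t)) has_integral (\<i> * (2 * pi * P 0))) {0..2*pi}"
    by (simp add: algebra_simps)
  from has_integral_mult_right[OF this, of "-\<i>"] have "((\<lambda>t. P (r * cis t)) has_integral (2 * pi * P 0)) {0..2*pi}"
    by simp
  from has_integral_mult_right[OF has_integral_Re[OF this], of 2] have J0: "((\<lambda>t. 2 * Re (P (r * cis t))) has_integral (2 * (2 * pi * Re (P 0)))) {0..2*pi}"
    by simp
  have "norm (integral {0..2*pi} (\<lambda>t. of_real (2 * Re (P (r * cis t))) * cis (- (real n * t))))
        \<le> integral {0..2*pi} (\<lambda>t. 2 * Re (P (r * cis t)))"
  proof (rule integral_norm_bound_integral)
    show "(\<lambda>t. of_real (2 * Re (P (r * cis t))) * cis (- (real n * t))) integrable_on {0..2*pi}"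
      using J3 by blast
    show "(\<lambda>t. 2 * Re (P (r * cis t))) integrable_on {0..2*pi}" using J0 by blast
    fix t
    have "Re (P (r * cis t)) > 0" using r by (intro pos) (simp add: norm_mult)
    thus "norm (of_real (2 * Re (P (r * cis t))) * cis (- (real n * t))) \<le> 2 * Re (P (r * cis t))"
      by (simp add: norm_mult)
  qed
  hence "norm (2 * pi * r^n * D / fact n) \<le> 2 * (2 * pi * Re (P 0))"
    using integral_unique[OF J3] integral_unique[OF J0] by simp
  hence "2 * pi * (r^n * norm (D / fact n)) \<le> 2 * pi * (2 * Re (P 0))"
    using r by (simp add: norm_mult norm_divide algebra_simps norm_power)
  thus ?thesis unfolding D_def by simp
qed

lemma hd_zmult:
  assumes "g holomorphic_on ball 0 1"
  shows "(deriv ^^ Suc n) (\<lambda>z. z * g z) 0 = of_nat (Suc n) * (deriv ^^ n) g 0"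
proof -
  have "(deriv ^^ Suc n) (\<lambda>z. z * g z) 0 = (\<Sum>i=0..Suc n. of_nat (Suc n choose i) * (deriv ^^ i) (\<lambda>w. w) 0 * (deriv ^^ (Suc n - i)) g 0)"
    by (rule higher_deriv_mult[of "\<lambda>w. w" "ball 0 1" g]) (use assms in auto)
  also have "\<dots> = (\<Sum>i\<in>{0..Suc n}. if i = 1 then of_nat (Suc n) * (deriv ^^ n) g 0 else 0)"
    by (rule sum.cong) auto
  also have "\<dots> = of_nat (Suc n) * (deriv ^^ n) g 0" by simp
  finally show ?thesis .
qed

definition Lop :: "real \<Rightarrow> real \<Rightarrow> (complex \<Rightarrow> complex) \<Rightarrow> complex \<Rightarrow> complex" where
  "Lop \<gamma> \<delta> g z = of_real \<gamma> * deriv g z + of_real \<delta> * (z * (deriv ^^ 2) g z)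
      + of_real ((\<delta> - \<gamma>) / 2) * (z * (z * (deriv ^^ 3) g z))"

lemma Lop_holo:
  assumes "g holomorphic_on ball 0 1"
  shows "Lop \<gamma> \<delta> g holomorphic_on ball 0 1"
  unfolding Lop_def[abs_def] using assms
  by (intro holomorphic_intros holomorphic_higher_deriv holomorphic_deriv) auto

lemma Lop_hd:
  assumes hg: "g holomorphic_on ball 0 1"
  shows "(deriv ^^ Suc k) (Lop \<gamma> \<delta> g) 0
     = of_real (\<gamma> + \<delta> * real (Suc k) + (\<delta> - \<gamma>) / 2 * real (Suc k) * real k) * (deriv ^^ Suc (Suc k)) g 0"
proof -
  define D2 where "D2 = (deriv ^^ 2) g"
  define D3 where "D3 = (deriv ^^ 3) g"
  have h1: "deriv g holomorphic_on ball 0 1" using hg by (intro holomorphic_deriv) auto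
  have h2: "D2 holomorphic_on ball 0 1" unfolding D2_def using hg by (intro holomorphic_higher_deriv) auto
  have h3: "D3 holomorphic_on ball 0 1" unfolding D3_def using hg by (intro holomorphic_higher_deriv) auto
  have h2': "(\<lambda>z. z * D2 z) holomorphic_on ball 0 1" using h2 by (intro holomorphic_intros)
  have h3': "(\<lambda>z. z * D3 z) holomorphic_on ball 0 1" using h3 by (intro holomorphic_intros)
  have h3'': "(\<lambda>z. z * (z * D3 z)) holomorphic_on ball 0 1" using h3 by (intro holomorphic_intros)
  have o: "open (ball (0::complex) 1)" "(0::complex) \<in> ball 0 1" by auto
  define F1 where "F1 = (\<lambda>z. of_real \<gamma> * deriv g z)"
  define F2 where "F2 = (\<lambda>z. of_real \<delta> * (z * D2 z))"
  define F3 where "F3 = (\<lambda>z. of_real ((\<delta> - \<gamma>) / 2) * (z * (z * D3 z)))"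
  have hF1: "F1 holomorphic_on ball 0 1" unfolding F1_def by (rule holomorphic_on_mult[OF holomorphic_on_const h1])
  have hF2: "F2 holomorphic_on ball 0 1" unfolding F2_def by (rule holomorphic_on_mult[OF holomorphic_on_const h2'])
  have hF3: "F3 holomorphic_on ball 0 1" unfolding F3_def by (rule holomorphic_on_mult[OF holomorphic_on_const h3''])
  have hF12: "(\<lambda>z. F1 z + F2 z) holomorphic_on ball 0 1" by (rule holomorphic_on_add[OF hF1 hF2])
  have eqL: "Lop \<gamma> \<delta> g = (\<lambda>z. (F1 z + F2 z) + F3 z)"
    unfolding Lop_def F1_def F2_def F3_def D2_def D3_def by auto
  have "(deriv ^^ Suc k) (Lop \<gamma> \<delta> g) 0
      = (deriv ^^ Suc k) (\<lambda>z. F1 z + F2 z) 0 + (deriv ^^ Suc k) F3 0"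
    unfolding eqL by (rule higher_deriv_add[OF hF12 hF3 o])
  also have "(deriv ^^ Suc k) (\<lambda>z. F1 z + F2 z) 0 = (deriv ^^ Suc k) F1 0 + (deriv ^^ Suc k) F2 0"
    by (rule higher_deriv_add[OF hF1 hF2 o])
  also have "(deriv ^^ Suc k) F1 0 = of_real \<gamma> * (deriv ^^ Suc k) (deriv g) 0"
    unfolding F1_def by (rule higher_deriv_cmult[OF h1 o(2) o(1)])
  also have "(deriv ^^ Suc k) F2 0 = of_real \<delta> * (deriv ^^ Suc k) (\<lambda>z. z * D2 z) 0"
    unfolding F2_def by (rule higher_deriv_cmult[OF h2' o(2) o(1)])
  also have "(deriv ^^ Suc k) F3 0 = of_real ((\<delta> - \<gamma>) / 2) * (deriv ^^ Suc k) (\<lambda>z. z * (z * D3 z)) 0"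
    unfolding F3_def by (rule higher_deriv_cmult[OF h3'' o(2) o(1)])
  also have "(deriv ^^ Suc k) (deriv g) 0 = (deriv ^^ Suc (Suc k)) g 0"
    by (simp only: funpow_Suc_right o_def)
  also have "(deriv ^^ Suc k) (\<lambda>z. z * D2 z) 0 = of_nat (Suc k) * (deriv ^^ Suc (Suc k)) g 0"
  proof -
    have "(deriv ^^ k) D2 = (deriv ^^ (k + 2)) g"
      unfolding D2_def by (metis comp_apply funpow_add)
    thus ?thesis using hd_zmult[OF h2, of k] by simp
  qed
  also have "(deriv ^^ Suc k) (\<lambda>z. z * (z * D3 z)) 0 = of_nat (Suc k) * of_nat k * (deriv ^^ Suc (Suc k)) g 0"
  proof (cases k)
    case 0 thus ?thesis using hd_zmult[OF h3', of 0] by simp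
  next
    case (Suc j)
    have c0: "(deriv ^^ j) D3 = (deriv ^^ (j + 3)) g"
      unfolding D3_def by (metis comp_apply funpow_add)
    have "j + 3 = Suc (Suc k)" using Suc by simp
    hence c: "(deriv ^^ j) D3 = (deriv ^^ Suc (Suc k)) g" using c0 by (simp only:)
    have a: "(deriv ^^ Suc (Suc j)) (\<lambda>z. z * (z * D3 z)) 0 = of_nat (Suc (Suc j)) * (deriv ^^ Suc j) (\<lambda>z. z * D3 z) 0"
      by (rule hd_zmult[OF h3'])
    have b: "(deriv ^^ Suc j) (\<lambda>z. z * D3 z) 0 = of_nat (Suc j) * (deriv ^^ j) D3 0"
      by (rule hd_zmult[OF h3])
    show ?thesis unfolding Suc a b c by (simp only: mult.assoc)
  qed
  finally show ?thesis by (simp add: field_simps del: funpow.simps)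
qed

lemma exists_rot: "\<exists>e::complex. norm e = 1 \<and> norm (a + e * b) = norm a + norm b"
proof (cases "a = 0 \<or> b = 0")
  case True thus ?thesis by (intro exI[of _ 1]) auto
next
  case False
  hence na: "a \<noteq> 0" and nb: "b \<noteq> 0" by auto
  define e where "e = (a * of_real (norm b)) / (of_real (norm a) * b)"
  have "a + e * b = a * of_real ((norm a + norm b) / norm a)"
    using na nb unfolding e_def by (simp add: field_simps)
  hence "norm (a + e * b) = norm a * abs ((norm a + norm b) / norm a)" by (simp only: norm_mult norm_of_real)
  also have "\<dots> = norm a + norm b" using na by (simp add: field_simps)
  finally have "norm (a + e * b) = norm a + norm b" .
  moreover have "norm e = 1" using na nb unfolding e_def by (simp add: norm_divide norm_mult)
  ultimately show ?thesis by blast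
qed

lemma carath:
  fixes P :: "complex \<Rightarrow> complex"
  assumes hol: "P holomorphic_on ball 0 1" and pos: "\<And>z. z \<in> ball 0 1 \<Longrightarrow> Re (P z) > 0"
    and n: "n \<ge> 1"
  shows "norm ((deriv ^^ n) P 0 / fact n) \<le> 2 * Re (P 0)"
proof (rule field_le_mult_one_interval)
  fix z :: real assume z: "0 < z" "z < 1"
  define r where "r = root n z"
  have "r ^ n = z" unfolding r_def using z n by (simp add: real_root_pow_pos)
  moreover have "0 < r" "r < 1" unfolding r_def using z n by auto
  ultimately show "z * norm ((deriv ^^ n) P 0 / fact n) \<le> 2 * Re (P 0)"
    using carath_rho[OF hol pos n] by blast
qed

lemma RH0_expr:
  "of_real \<gamma> * deriv g z + of_real \<delta> * z * (deriv ^^ 2) g z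
            + of_real ((\<delta> - \<gamma>) / 2) * z^2 * (deriv ^^ 3) g z = Lop \<gamma> \<delta> g z"
  unfolding Lop_def by (simp add: power2_eq_square algebra_simps)

lemma coef_bound:
  assumes p: "0 \<le> lam" "lam < \<gamma>" "\<gamma> \<le> \<delta>" and RH: "in_RH0 \<gamma> \<delta> lam s t" and m: "m \<ge> 2"
  shows "norm ((deriv ^^ m) s 0 / fact m) + norm ((deriv ^^ m) t 0 / fact m) \<le> (\<gamma> - lam) / (\<gamma> + \<delta>)"
proof -
  obtain k where k: "m = Suc (Suc k)" using m by (metis add_2_eq_Suc le_Suc_ex)
  have hs: "s holomorphic_on ball 0 1" and ht: "t holomorphic_on ball 0 1"
    and s0: "deriv s 0 = 1" and t0: "deriv t 0 = 0"
    and ineq: "\<And>z. z \<in> ball 0 1 \<Longrightarrow> Re (Lop \<gamma> \<delta> s z - of_real lam) > norm (Lop \<gamma> \<delta> t z)"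
    using RH unfolding in_RH0_def RH0_expr by auto
  define a where "a = (deriv ^^ m) s 0 / fact m"
  define b where "b = (deriv ^^ m) t 0 / fact m"
  obtain e where e: "norm e = 1" "norm (a + e * b) = norm a + norm b" using exists_rot by blast
  define P where "P = (\<lambda>z. (Lop \<gamma> \<delta> s z - of_real lam) + e * Lop \<gamma> \<delta> t z)"
  have hLs: "Lop \<gamma> \<delta> s holomorphic_on ball 0 1" by (rule Lop_holo[OF hs])
  have hLt: "Lop \<gamma> \<delta> t holomorphic_on ball 0 1" by (rule Lop_holo[OF ht])
  have hA: "(\<lambda>z. Lop \<gamma> \<delta> s z - of_real lam) holomorphic_on ball 0 1"
    by (rule holomorphic_on_diff[OF hLs holomorphic_on_const])
  have hB: "(\<lambda>z. e * Lop \<gamma> \<delta> t z) holomorphic_on ball 0 1"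
    by (rule holomorphic_on_mult[OF holomorphic_on_const hLt])
  have hP: "P holomorphic_on ball 0 1" unfolding P_def by (rule holomorphic_on_add[OF hA hB])
  have posP: "Re (P z) > 0" if "z \<in> ball 0 1" for z
  proof -
    have "- Re (e * Lop \<gamma> \<delta> t z) \<le> norm (e * Lop \<gamma> \<delta> t z)"
      by (metis abs_Re_le_cmod abs_le_iff)
    also have "\<dots> = norm (Lop \<gamma> \<delta> t z)" using e(1) by (simp add: norm_mult)
    finally show ?thesis using ineq[OF that] unfolding P_def by simp
  qed
  have o: "open (ball (0::complex) 1)" "(0::complex) \<in> ball 0 1" by auto
  have "(deriv ^^ Suc k) P 0 = (deriv ^^ Suc k) (\<lambda>z. Lop \<gamma> \<delta> s z - of_real lam) 0 + (deriv ^^ Suc k) (\<lambda>z. e * Lop \<gamma> \<delta> t z) 0"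
    unfolding P_def by (rule higher_deriv_add[OF hA hB o])
  also have "(deriv ^^ Suc k) (\<lambda>z. Lop \<gamma> \<delta> s z - of_real lam) 0 = (deriv ^^ Suc k) (Lop \<gamma> \<delta> s) 0 - (deriv ^^ Suc k) (\<lambda>z. of_real lam) 0"
    by (rule higher_deriv_diff[OF hLs holomorphic_on_const o])
  also have "(deriv ^^ Suc k) (\<lambda>z. e * Lop \<gamma> \<delta> t z) 0 = e * (deriv ^^ Suc k) (Lop \<gamma> \<delta> t) 0"
    by (rule higher_deriv_cmult[OF hLt o(2) o(1)])
  finally have "(deriv ^^ Suc k) P 0 = (deriv ^^ Suc k) (Lop \<gamma> \<delta> s) 0 + e * (deriv ^^ Suc k) (Lop \<gamma> \<delta> t) 0"
    by (simp del: funpow.simps)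
  also have "\<dots> = of_real (\<gamma> + \<delta> * real (Suc k) + (\<delta> - \<gamma>) / 2 * real (Suc k) * real k) * ((deriv ^^ m) s 0 + e * (deriv ^^ m) t 0)"
  proof -
    have gen: "\<And>K X Y (e::complex). K * X + e * (K * Y) = K * (X + e * Y)" by (simp add: algebra_simps)
    show ?thesis unfolding Lop_hd[OF hs] Lop_hd[OF ht] k by (rule gen)
  qed
  finally have dP: "(deriv ^^ Suc k) P 0 = of_real (\<gamma> + \<delta> * real (Suc k) + (\<delta> - \<gamma>) / 2 * real (Suc k) * real k) * ((deriv ^^ m) s 0 + e * (deriv ^^ m) t 0)" .
  have P0: "P 0 = of_real (\<gamma> - lam)"
    unfolding P_def Lop_def using s0 t0 by simp
  define K where "K = \<gamma> + \<delta> * real (Suc k) + (\<delta> - \<gamma>) / 2 * real (Suc k) * real k"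
  have K: "K \<ge> \<gamma> + \<delta>"
  proof -
    have "0 \<le> (\<delta> - \<gamma>) / 2 * real (Suc k) * real k" using p by simp
    moreover have "\<delta> \<le> \<delta> * real (Suc k)" using p by simp
    ultimately show ?thesis unfolding K_def by linarith
  qed
  have hw: "(deriv ^^ m) s 0 + e * (deriv ^^ m) t 0 = fact m * (a + e * b)"
    unfolding a_def b_def by (simp add: field_simps del: funpow.simps)
  have fm: "(fact m :: complex) = of_nat m * fact (Suc k)" unfolding k by (simp only: fact_Suc)
  have "(deriv ^^ Suc k) P 0 / fact (Suc k) = of_real K * (fact m * (a + e * b)) / fact (Suc k)"
    using dP[folded K_def] hw by (simp only:)
  also have "\<dots> = of_real K * of_nat m * (a + e * b)" unfolding fm by (simp del: fact_Suc)
  finally have "(deriv ^^ Suc k) P 0 / fact (Suc k) = of_real K * of_nat m * (a + e * b)" .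
  hence "norm (of_real K * of_nat m * (a + e * b)) \<le> 2 * (\<gamma> - lam)"
    using carath[OF hP posP, of "Suc k"] P0 by simp
  hence "K * m * (norm a + norm b) \<le> 2 * (\<gamma> - lam)"
    using e(2) K p by (simp add: norm_mult)
  moreover have "(\<gamma> + \<delta>) * 2 * (norm a + norm b) \<le> K * m * (norm a + norm b)"
    using K m p by (intro mult_right_mono mult_mono) auto
  ultimately have "(\<gamma> + \<delta>) * (norm a + norm b) \<le> \<gamma> - lam" by (simp add: algebra_simps)
  thus ?thesis unfolding a_def[symmetric] b_def[symmetric] using p
    by (simp add: field_simps)
qed

lemma re_pos_of_dist:
  fixes w :: complex
  assumes "norm (w - 1) < norm (w + 1)"
  shows "Re w > 0"
proof -
  have "norm (w - 1) ^ 2 < norm (w + 1) ^ 2"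
    using assms by (intro power_strict_mono) auto
  hence "(Re w - 1)^2 + (Im w)^2 < (Re w + 1)^2 + (Im w)^2"
    using cmod_power2[of "w - 1"] cmod_power2[of "w + 1"] by simp
  thus ?thesis by (simp add: power2_eq_square algebra_simps)
qed

lemma series_at:
  assumes "g holomorphic_on ball 0 1" "z \<in> ball 0 1"
  shows "(\<lambda>n. ((deriv ^^ n) g 0 / fact n) * z ^ n) sums g z"
  using holomorphic_power_series[OF assms] by simp

lemma deriv_series_at:
  assumes hg: "g holomorphic_on ball 0 1" and z: "z \<in> ball 0 1"
  shows "(\<lambda>n. of_nat n * ((deriv ^^ n) g 0 / fact n) * z ^ n) sums (z * deriv g z)"
proof -
  have hdg: "deriv g holomorphic_on ball 0 1" using hg by (intro holomorphic_deriv) auto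
  have "(\<lambda>n. (deriv ^^ n) (deriv g) 0 / fact n * (z - 0) ^ n) sums deriv g z"
    by (rule holomorphic_power_series[OF hdg z])
  moreover have "(deriv ^^ n) (deriv g) 0 / fact n = of_nat (Suc n) * ((deriv ^^ Suc n) g 0 / fact (Suc n))" for n
  proof -
    have e1: "(deriv ^^ Suc n) g = (deriv ^^ n) (deriv g)" by (simp only: funpow_Suc_right o_def)
    have e2: "(fact (Suc n) :: complex) = of_nat (Suc n) * fact n" by (simp only: fact_Suc of_nat_mult of_nat_fact)
    have gen: "\<And>(c::complex) f Y. c \<noteq> 0 \<Longrightarrow> f \<noteq> 0 \<Longrightarrow> c * (Y / (c * f)) = Y / f" by (simp add: field_simps)
    have "of_nat (Suc n) * ((deriv ^^ Suc n) g 0 / fact (Suc n)) = (deriv ^^ Suc n) g 0 / (fact n :: complex)"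
      unfolding e2 by (rule gen[OF of_nat_neq_0 fact_nonzero])
    thus ?thesis unfolding e1 by simp

  qed
  ultimately have "(\<lambda>n. of_nat (Suc n) * ((deriv ^^ Suc n) g 0 / fact (Suc n)) * z ^ n) sums deriv g z"
    by simp
  hence "(\<lambda>n. z * (of_nat (Suc n) * ((deriv ^^ Suc n) g 0 / fact (Suc n)) * z ^ n)) sums (z * deriv g z)"
    by (rule sums_mult)
  hence "(\<lambda>n. of_nat (Suc n) * ((deriv ^^ Suc n) g 0 / fact (Suc n)) * z ^ Suc n) sums (z * deriv g z)"
    by (simp only: power_Suc mult_ac)
  from sums_Suc[OF this] show ?thesis by simp
qed

lemma W_sums:
  fixes C \<rho> :: real
  assumes r: "0 < \<rho>" "\<rho> < 1"
  shows "(\<lambda>n. if n \<ge> 2 then 2 * C * real n * \<rho> ^ n else 0) sums (2 * C * \<rho> * (1 / (1 - \<rho>)^2 - 1))"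
proof -
  define W where "W = (\<lambda>n::nat. if n \<ge> 2 then 2 * C * real n * \<rho> ^ n else 0)"
  have Wg: "(\<lambda>n. of_nat (Suc n) * \<rho> ^ n) sums (1 / (1 - \<rho>)^2)"
    by (rule geometric_deriv_sums) (use r in simp)
  have "(\<lambda>n. 2 * C * \<rho> * (of_nat (Suc n) * \<rho> ^ n - (if n = 0 then 1 else 0))) sums (2 * C * \<rho> * (1 / (1 - \<rho>)^2 - 1))"
    by (intro sums_mult sums_diff Wg) (rule sums_single[of 0 "\<lambda>_. 1::real", simplified])
  moreover have "W (Suc n) = 2 * C * \<rho> * (of_nat (Suc n) * \<rho> ^ n - (if n = 0 then 1 else 0))" for n
    unfolding W_def by (cases n) (auto simp: algebra_simps)
  ultimately have "(\<lambda>n. W (Suc n)) sums (2 * C * \<rho> * (1 / (1 - \<rho>)^2 - 1))" by simp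
  from sums_Suc[OF this] show ?thesis unfolding W_def by simp
qed

lemma est:
  fixes z :: complex
  assumes p: "0 \<le> lam" "lam < \<gamma>" "\<gamma> \<le> \<delta>" and RH: "in_RH0 \<gamma> \<delta> lam s t"
    and r: "0 < \<rho>" "\<rho> < 1" and cond: "(\<gamma> - lam) / (\<gamma> + \<delta>) * (1 / (1 - \<rho>)^2 - 1) < 1"
    and z: "norm z = \<rho>"
  shows "Re ((s z + cnj (t z)) / z) > 0 \<and> Re ((z * deriv s z - cnj (z * deriv t z)) / (s z + cnj (t z))) > 0"
proof -
  have hs: "s holomorphic_on ball 0 1" and ht: "t holomorphic_on ball 0 1"
    and s0: "s 0 = 0" and ds0: "deriv s 0 = 1" and t0: "t 0 = 0" and dt0: "deriv t 0 = 0"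
    using RH unfolding in_RH0_def by auto
  define C where "C = (\<gamma> - lam) / (\<gamma> + \<delta>)"
  define a where "a n = (deriv ^^ n) s 0 / fact n" for n
  define b where "b n = (deriv ^^ n) t 0 / fact n" for n
  have a0: "a 0 = 0" "a 1 = 1" "b 0 = 0" "b 1 = 0" unfolding a_def b_def using s0 ds0 t0 dt0 by auto
  have ab: "norm (a n) + norm (b n) \<le> C" if "n \<ge> 2" for n
    unfolding a_def b_def C_def by (rule coef_bound[OF p RH that])
  have zb: "z \<in> ball 0 1" using z r by simp
  define F where "F = s z + cnj (t z)"
  define G where "G = z * deriv s z - cnj (z * deriv t z)"
  have Ss: "(\<lambda>n. a n * z ^ n) sums s z" unfolding a_def by (rule series_at[OF hs zb])
  have St: "(\<lambda>n. b n * z ^ n) sums t z" unfolding b_def by (rule series_at[OF ht zb])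
  have Sds: "(\<lambda>n. of_nat n * a n * z ^ n) sums (z * deriv s z)" unfolding a_def by (rule deriv_series_at[OF hs zb])
  have Sdt: "(\<lambda>n. of_nat n * b n * z ^ n) sums (z * deriv t z)" unfolding b_def by (rule deriv_series_at[OF ht zb])
  have SF: "(\<lambda>n. a n * z ^ n + cnj (b n * z ^ n)) sums F"
    unfolding F_def by (rule sums_add[OF Ss sums_cnj[THEN iffD2, OF St]])
  have SG: "(\<lambda>n. of_nat n * a n * z ^ n - cnj (of_nat n * b n * z ^ n)) sums G"
    unfolding G_def by (rule sums_diff[OF Sds sums_cnj[THEN iffD2, OF Sdt]])
  define X where "X n = (of_nat n * a n * z ^ n - cnj (of_nat n * b n * z ^ n)) + (a n * z ^ n + cnj (b n * z ^ n)) - (if n = 1 then 2 * z else 0)" for n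
  define Y where "Y n = (of_nat n * a n * z ^ n - cnj (of_nat n * b n * z ^ n)) - (a n * z ^ n + cnj (b n * z ^ n))" for n
  have SX: "X sums (G + F - 2 * z)"
    unfolding X_def by (intro sums_diff sums_add SG SF) (use sums_single[of 1 "\<lambda>_. 2 * z"] in simp)
  have SY: "Y sums (G - F)"
    unfolding Y_def by (intro sums_diff SG SF)
  define U where "U n = (if n \<ge> 2 then ((real n + 1) * norm (a n) + (real n - 1) * norm (b n)) * \<rho> ^ n else 0)" for n
  define V where "V n = (if n \<ge> 2 then ((real n - 1) * norm (a n) + (real n + 1) * norm (b n)) * \<rho> ^ n else 0)" for n
  define W where "W n = (if n \<ge> 2 then 2 * C * real n * \<rho> ^ n else 0)" for n
  have cn: "cnj (of_nat n * w) = of_nat n * cnj w" for n w by simp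
  have g1: "\<And>c A B::complex. c * A - c * B + (A + B) - 0 = (c + 1) * A - (c - 1) * B" by (simp add: algebra_simps)
  have g2: "\<And>c A B::complex. c * A - c * B - (A + B) = (c - 1) * A - (c + 1) * B" by (simp add: algebra_simps)
  have nn1: "norm (of_nat n - 1 :: complex) = real n - 1" if "n \<ge> 1" for n
  proof -
    have "(of_nat n - 1 :: complex) = of_real (real n - 1)" by simp
    thus ?thesis using that by (simp only: norm_of_real)
  qed
  have nn2: "norm (of_nat n + 1 :: complex) = real n + 1" for n
  proof -
    have "(of_nat n + 1 :: complex) = of_real (real n + 1)" by simp
    thus ?thesis by (simp only: norm_of_real)
  qed
  have XU: "norm (X n) \<le> U n" for n
  proof (cases "n \<ge> 2")
    case True
    have "X n = (of_nat n + 1) * (a n * z ^ n) - (of_nat n - 1) * cnj (b n * z ^ n)"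
    proof -
      have n1: "(n = 1) = False" using True by simp
      show ?thesis unfolding X_def by (simp only: mult.assoc[of "of_nat n"] cn n1 if_False g1)
    qed
    also have "norm \<dots> \<le> norm ((of_nat n + 1) * (a n * z ^ n)) + norm ((of_nat n - 1) * cnj (b n * z ^ n))"
      by (rule norm_triangle_ineq4)
    also have "\<dots> = U n" unfolding U_def using True z
      by (simp only: norm_mult nn1 nn2 complex_mod_cnj norm_power) (simp add: algebra_simps)
    finally show ?thesis .
  next
    case False
    hence "n = 0 \<or> n = 1" by auto
    thus ?thesis unfolding X_def U_def using a0 by auto
  qed
  have YV: "norm (Y n) \<le> V n" for n
  proof (cases "n \<ge> 2")
    case True
    have "Y n = (of_nat n - 1) * (a n * z ^ n) - (of_nat n + 1) * cnj (b n * z ^ n)"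
      unfolding Y_def by (simp only: mult.assoc[of "of_nat n"] cn g2)
    also have "norm \<dots> \<le> norm ((of_nat n - 1) * (a n * z ^ n)) + norm ((of_nat n + 1) * cnj (b n * z ^ n))"
      by (rule norm_triangle_ineq4)
    also have "\<dots> = V n" unfolding V_def using True z
      by (simp only: norm_mult nn1 nn2 complex_mod_cnj norm_power) (simp add: algebra_simps)
    finally show ?thesis .
  next
    case False
    hence "n = 0 \<or> n = 1" by auto
    thus ?thesis unfolding Y_def V_def using a0 by auto
  qed
  have U0: "U n \<ge> 0" "V n \<ge> 0" for n unfolding U_def V_def using r by auto
  have UVW: "U n + V n \<le> W n" for n
  proof (cases "n \<ge> 2")
    case True
    have "U n + V n = 2 * real n * (norm (a n) + norm (b n)) * \<rho> ^ n"
      unfolding U_def V_def using True by (simp add: of_nat_diff algebra_simps)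
    also have "\<dots> \<le> 2 * real n * C * \<rho> ^ n"
      using ab[OF True] r by (intro mult_right_mono mult_left_mono) auto
    finally show ?thesis unfolding W_def using True by (simp add: algebra_simps)
  qed (auto simp: U_def V_def W_def)
  have SW: "W sums (2 * C * \<rho> * (1 / (1 - \<rho>)^2 - 1))"
    unfolding W_def by (rule W_sums[OF r])
  have UW: "norm (U n) \<le> W n" "norm (V n) \<le> W n" for n
    using U0[of n] UVW[of n] by auto
  have sU: "summable U"
    by (rule summable_comparison_test'[OF sums_summable[OF SW] UW(1)])
  have sV: "summable V"
    by (rule summable_comparison_test'[OF sums_summable[OF SW] UW(2)])
  have nX: "norm (G + F - 2 * z) \<le> suminf U"
    using norm_suminf_le[OF XU sU] sums_unique[OF SX] by simp
  have nY: "norm (G - F) \<le> suminf V"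
    using norm_suminf_le[OF YV sV] sums_unique[OF SY] by simp
  have "suminf U + suminf V = (\<Sum>n. U n + V n)" by (rule suminf_add[OF sU sV])
  also have "\<dots> \<le> suminf W" by (rule suminf_le[OF UVW summable_add[OF sU sV] sums_summable[OF SW]])
  also have "\<dots> = 2 * C * \<rho> * (1 / (1 - \<rho>)^2 - 1)" using sums_unique[OF SW] by simp
  also have "\<dots> < 2 * \<rho>" using cond r unfolding C_def[symmetric] by simp
  finally have E: "norm (G + F - 2 * z) + norm (G - F) < 2 * \<rho>" using nX nY by linarith
  have eqF: "F - z = ((G + F - 2 * z) - (G - F)) / 2" by (simp add: field_simps)
  have "norm (F - z) = norm ((G + F - 2 * z) - (G - F)) / 2" unfolding eqF by (simp add: norm_divide)
  moreover have "norm ((G + F - 2 * z) - (G - F)) \<le> norm (G + F - 2 * z) + norm (G - F)"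
    by (rule norm_triangle_ineq4)
  ultimately have Fz: "norm (F - z) < \<rho>" using E by linarith
  have z0: "z \<noteq> 0" using z r by auto
  have "F / z - 1 = (F - z) / z" using z0 by (simp add: field_simps)
  hence "norm (F / z - 1) = norm (F - z) / \<rho>" using z by (simp add: norm_divide)
  hence "norm (F / z - 1) < 1" using Fz r by simp
  hence "Re (F / z - 1) > -1" using abs_Re_le_cmod[of "F / z - 1"] by linarith
  hence ReF: "Re (F / z) > 0" by simp
  hence F0: "F \<noteq> 0" by auto
  have "norm (2 * z) \<le> norm (G + F) + norm (G + F - 2 * z)"
    by (metis add.commute diff_add_cancel norm_triangle_ineq4 norm_minus_commute diff_diff_eq2 norm_triangle_sub)
  hence "norm (G - F) < norm (G + F)" using E z by (simp add: norm_mult)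
  moreover have "G / F - 1 = (G - F) / F" "G / F + 1 = (G + F) / F" using F0 by (simp_all add: field_simps)
  ultimately have "norm (G / F - 1) < norm (G / F + 1)" using F0
    by (simp add: norm_divide divide_strict_right_mono)
  hence "Re (G / F) > 0" by (rule re_pos_of_dist)
  thus ?thesis using ReF unfolding F_def G_def by simp
qed

lemma cis_not_eq_lemma:
  assumes "a < b" "b < a + 2 * pi"
  shows "cis a \<noteq> cis b"
proof
  assume "cis a = cis b"
  hence "cis (b - a) = 1" by (simp add: cis_divide[symmetric])
  hence "cos (b - a) = 1" by (metis cis.sel(1) one_complex.sel(1))
  then obtain n :: int where n: "b - a = real_of_int n * 2 * pi" unfolding cos_one_2pi_int by blast
  have "0 < real_of_int n * (2 * pi)" "real_of_int n * (2 * pi) < 1 * (2 * pi)" using assms n by (auto simp: algebra_simps)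
  hence "0 < real_of_int n" "real_of_int n < 1"
    by (simp_all add: zero_less_mult_iff mult_less_cancel_right)
  hence "0 < n" "n < 1" by simp_all
  thus False by linarith
qed

lemma arg_inj:
  fixes s t :: "complex \<Rightarrow> complex" and \<rho> :: real and u1 u2 :: complex
  assumes hs: "s holomorphic_on ball 0 1" and ht: "t holomorphic_on ball 0 1"
    and r: "0 < \<rho>" "\<rho> < 1"
    and pos: "\<And>z. norm z = \<rho> \<Longrightarrow> Re ((s z + cnj (t z)) / z) > 0 \<and>
                 Re ((z * deriv s z - cnj (z * deriv t z)) / (s z + cnj (t z))) > 0"
    and u: "norm u1 = 1" "norm u2 = 1"
    and eq: "sgn (s (of_real \<rho> * u1) + cnj (t (of_real \<rho> * u1))) = sgn (s (of_real \<rho> * u2) + cnj (t (of_real \<rho> * u2)))"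
  shows "u1 = u2"
proof -
  define zz where "zz \<theta> = complex_of_real \<rho> * cis \<theta>" for \<theta>
  have nz: "norm (zz \<theta>) = \<rho>" for \<theta> unfolding zz_def using r by (simp add: norm_mult)
  have zb: "zz \<theta> \<in> ball 0 1" for \<theta> using nz[of \<theta>] r by simp
  define F where "F \<theta> = s (zz \<theta>) + cnj (t (zz \<theta>))" for \<theta>
  define G where "G \<theta> = zz \<theta> * deriv s (zz \<theta>) - cnj (zz \<theta> * deriv t (zz \<theta>))" for \<theta>
  define Q where "Q \<theta> = F \<theta> * cis (- \<theta>)" for \<theta>
  have posF: "Re (F \<theta> / zz \<theta>) > 0" and posG: "Re (G \<theta> / F \<theta>) > 0" for \<theta>
    using pos[OF nz[of \<theta>]] unfolding F_def G_def by auto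
  have F0: "F \<theta> \<noteq> 0" for \<theta> using posF[of \<theta>] by auto
  have Qeq: "Q \<theta> = of_real \<rho> * (F \<theta> / zz \<theta>)" for \<theta>
  proof -
    have "cis (- \<theta>) = inverse (cis \<theta>)" by simp
    thus ?thesis unfolding Q_def zz_def using r by (simp add: field_simps)
  qed
  have ReR: "Re (complex_of_real \<rho> * w) = \<rho> * Re w" for w by simp
  have ReQ: "Re (Q \<theta>) > 0" for \<theta> unfolding Qeq ReR using r posF[of \<theta>] by simp
  have QnR: "Q \<theta> \<notin> \<real>\<^sub>\<le>\<^sub>0" for \<theta> using ReQ[of \<theta>] by (auto simp: complex_nonpos_Reals_iff)
  have Q0: "Q \<theta> \<noteq> 0" for \<theta> using ReQ[of \<theta>] by auto
  define L where "L \<theta> = \<theta> + Im (Ln (Q \<theta>))" for \<theta>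
  have dcis: "(cis has_vector_derivative (\<i> * cis \<theta>)) (at \<theta>)" for \<theta>
    using has_derivative_cis[OF has_derivative_ident, of \<theta> UNIV]
    by (simp add: has_vector_derivative_def)
  have dL: "DERIV L \<theta> :> Re (G \<theta> / F \<theta>)" for \<theta>
  proof -
    have dz: "(zz has_vector_derivative (\<i> * zz \<theta>)) (at \<theta>)"
      unfolding zz_def
      by (rule has_vector_derivative_eq_rhs[OF has_vector_derivative_mult[OF has_vector_derivative_const dcis]])
         simp
    have ds: "((s \<circ> zz) has_vector_derivative (\<i> * zz \<theta> * deriv s (zz \<theta>))) (at \<theta>)"
      by (rule field_vector_diff_chain_at[OF dz holomorphic_derivI[OF hs open_ball zb]])
    have dt: "((t \<circ> zz) has_vector_derivative (\<i> * zz \<theta> * deriv t (zz \<theta>))) (at \<theta>)"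
      by (rule field_vector_diff_chain_at[OF dz holomorphic_derivI[OF ht open_ball zb]])
    have dF: "(F has_vector_derivative (\<i> * G \<theta>)) (at \<theta>)"
    proof -
      have "((\<lambda>x. (s \<circ> zz) x + cnj ((t \<circ> zz) x)) has_vector_derivative
              (\<i> * zz \<theta> * deriv s (zz \<theta>) + cnj (\<i> * zz \<theta> * deriv t (zz \<theta>)))) (at \<theta>)"
        by (rule has_vector_derivative_add[OF ds has_vector_derivative_cnj[OF dt]])
      moreover have "(\<lambda>x. (s \<circ> zz) x + cnj ((t \<circ> zz) x)) = F" unfolding F_def by auto
      moreover have "\<i> * zz \<theta> * deriv s (zz \<theta>) + cnj (\<i> * zz \<theta> * deriv t (zz \<theta>)) = \<i> * G \<theta>"
        unfolding G_def by (simp add: algebra_simps)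
      ultimately show ?thesis by simp
    qed
    have dc: "((\<lambda>x. cis (- x)) has_vector_derivative (- (\<i> * cis (- \<theta>)))) (at \<theta>)"
    proof -
      have "((\<lambda>x. cnj (cis x)) has_vector_derivative cnj (\<i> * cis \<theta>)) (at \<theta>)"
        by (rule has_vector_derivative_cnj[OF dcis])
      thus ?thesis by (simp add: cis_cnj)
    qed
    define Q' where "Q' = F \<theta> * (- (\<i> * cis (- \<theta>))) + \<i> * G \<theta> * cis (- \<theta>)"
    have dQ: "(Q has_vector_derivative Q') (at \<theta>)"
      unfolding Q_def[abs_def] Q'_def by (rule has_vector_derivative_mult[OF dF dc])
    have dLn: "((Ln \<circ> Q) has_vector_derivative (Q' * inverse (Q \<theta>))) (at \<theta>)"
      by (rule field_vector_diff_chain_at[OF dQ has_field_derivative_Ln[OF QnR]])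
    have dIm: "((\<lambda>x. Im ((Ln \<circ> Q) x)) has_field_derivative Im (Q' * inverse (Q \<theta>))) (at \<theta>)"
      by (rule has_field_derivative_Im[OF dLn])
    have "((\<lambda>x. x + Im ((Ln \<circ> Q) x)) has_field_derivative (1 + Im (Q' * inverse (Q \<theta>)))) (at \<theta>)"
      by (rule DERIV_add[OF DERIV_ident dIm])
    moreover have "(\<lambda>x. x + Im ((Ln \<circ> Q) x)) = L" unfolding L_def by auto
    moreover have "Q' * inverse (Q \<theta>) = \<i> * (G \<theta> / F \<theta>) - \<i>"
      unfolding Q'_def Q_def using F0[of \<theta>] by (simp add: field_simps)
    moreover have "Im (\<i> * w - \<i>) = Re w - 1" for w by simp
    ultimately have "((\<lambda>x. x + Im ((Ln \<circ> Q) x)) has_field_derivative (1 + (Re (G \<theta> / F \<theta>) - 1))) (at \<theta>)"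
      by metis
    thus ?thesis unfolding L_def[abs_def] by simp
  qed
  have incr: "L a < L b" if "a < b" for a b
    using DERIV_pos_imp_increasing[OF that] dL posG by blast
  have per: "L (\<theta> + 2 * pi) = L \<theta> + 2 * pi" for \<theta>
  proof -
    have c2: "cis (\<theta> + 2 * pi) = cis \<theta>"
      by (simp only: cis.ctr cos_periodic sin_periodic)
    have "cis (- (\<theta> + 2 * pi)) = cis (- \<theta>)"
      by (simp only: cis.ctr cos_minus sin_minus cos_periodic sin_periodic)
    moreover have "zz (\<theta> + 2 * pi) = zz \<theta>" unfolding zz_def c2 ..
    ultimately have "cis (- (\<theta> + 2 * pi)) = cis (- \<theta>)" "zz (\<theta> + 2 * pi) = zz \<theta>" by auto
    hence "Q (\<theta> + 2 * pi) = Q \<theta>" unfolding Q_def F_def by simp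
    thus ?thesis unfolding L_def by simp
  qed
  have rep: "sgn (F \<theta>) = cis (L \<theta>)" for \<theta>
  proof -
    have "Q \<theta> = exp (Ln (Q \<theta>))" using Q0[of \<theta>] by simp
    also have "\<dots> = of_real (exp (Re (Ln (Q \<theta>)))) * cis (Im (Ln (Q \<theta>)))" by (rule exp_eq_polar)
    also have "exp (Re (Ln (Q \<theta>))) = norm (Q \<theta>)"
      using Q0[of \<theta>] by (metis exp_Ln norm_exp_eq_Re)
    also have "norm (Q \<theta>) = norm (F \<theta>)" unfolding Q_def by (simp add: norm_mult)
    finally have "Q \<theta> = of_real (norm (F \<theta>)) * cis (Im (Ln (Q \<theta>)))" .
    hence "F \<theta> = of_real (norm (F \<theta>)) * cis (Im (Ln (Q \<theta>))) * cis \<theta>"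
      unfolding Q_def by (metis cis_inverse mult.assoc mult.right_neutral cis_neq_zero right_inverse inverse_inverse_eq)
    hence "F \<theta> = of_real (norm (F \<theta>)) * cis (L \<theta>)" unfolding L_def by (simp add: cis_mult mult.assoc add.commute)
    moreover have "\<And>w c. w = complex_of_real (norm w) * c \<Longrightarrow> w \<noteq> 0 \<Longrightarrow> w / complex_of_real (norm w) = c"
    proof -
      fix w c :: complex assume h: "w = complex_of_real (norm w) * c" "w \<noteq> 0"
      hence "complex_of_real (norm w) \<noteq> 0" by simp
      thus "w / complex_of_real (norm w) = c" using h(1) by (metis nonzero_mult_div_cancel_left)
    qed
    ultimately show ?thesis using F0[of \<theta>] by (simp add: sgn_eq)
  qed
  have key: "cis (L a) \<noteq> cis (L b)" if "- pi < a" "a < b" "b \<le> pi" for a b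
  proof -
    have "L a < L b" using incr that by blast
    moreover have "L b < L (a + 2 * pi)" using incr that by simp
    ultimately show ?thesis using cis_not_eq_lemma per[of a] by simp
  qed
  define \<theta>1 where "\<theta>1 = Arg u1"
  define \<theta>2 where "\<theta>2 = Arg u2"
  have uc: "w = cis (Arg w)" if "norm w = 1" for w :: complex
  proof -
    have "w \<noteq> 0" using that by auto
    hence "cis (Arg w) = sgn w" by (rule cis_Arg)
    thus ?thesis using that by (simp add: sgn_eq)
  qed
  have u1: "u1 = cis \<theta>1" and u2: "u2 = cis \<theta>2" unfolding \<theta>1_def \<theta>2_def using uc u by auto
  have "sgn (F \<theta>1) = sgn (F \<theta>2)" using eq unfolding F_def zz_def u1 u2 .
  hence c: "cis (L \<theta>1) = cis (L \<theta>2)" using rep by simp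
  have b: "- pi < \<theta>1" "\<theta>1 \<le> pi" "- pi < \<theta>2" "\<theta>2 \<le> pi" unfolding \<theta>1_def \<theta>2_def using Arg_bounded by auto
  have "\<theta>1 = \<theta>2"
  proof (rule ccontr)
    assume "\<theta>1 \<noteq> \<theta>2"
    hence "\<theta>1 < \<theta>2 \<or> \<theta>2 < \<theta>1" by auto
    thus False using key[of \<theta>1 \<theta>2] key[of \<theta>2 \<theta>1] b c by auto
  qed
  thus ?thesis using u1 u2 by simp
qed

lemma geom:
  fixes s t :: "complex \<Rightarrow> complex" and \<rho> :: real
  assumes hs: "s holomorphic_on ball 0 1" and ht: "t holomorphic_on ball 0 1"
    and r: "0 < \<rho>" "\<rho> < 1"
    and pos: "\<And>z. norm z = \<rho> \<Longrightarrow> Re ((s z + cnj (t z)) / z) > 0 \<and>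
                 Re ((z * deriv s z - cnj (z * deriv t z)) / (s z + cnj (t z))) > 0"
  shows "inj_on (\<lambda>z. s z + cnj (t z)) (sphere 0 \<rho>) \<and>
        (\<exists>D. open D \<and> connected D \<and> bounded D \<and> frontier D = (\<lambda>z. s z + cnj (t z)) ` sphere 0 \<rho> \<and>
             0 \<in> D \<and> (\<forall>w\<in>D. closed_segment 0 w \<subseteq> D))"
proof -
  define f where "f = (\<lambda>z. s z + cnj (t z))"
  define \<Psi> where "\<Psi> v = of_real (norm v) * f (of_real \<rho> * sgn v)" for v :: complex
  have contf: "continuous_on (ball 0 1) f" unfolding f_def
    using hs ht by (intro continuous_intros holomorphic_on_imp_continuous_on)
  have sphb: "sphere 0 \<rho> \<subseteq> ball (0::complex) 1" using r by auto
  have usph: "of_real \<rho> * u \<in> sphere 0 \<rho>" if "norm u = 1" for u :: complex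
    using that r by (simp add: norm_mult)
  have fnz: "f (of_real \<rho> * u) \<noteq> 0" if "norm u = 1" for u
  proof -
    have "norm (of_real \<rho> * u) = \<rho>" using usph[OF that] by simp
    from pos[OF this] have "Re (f (of_real \<rho> * u) / (of_real \<rho> * u)) > 0" unfolding f_def by simp
    thus ?thesis by auto
  qed
  have "compact (f ` sphere 0 \<rho>)"
    by (intro compact_continuous_image continuous_on_subset[OF contf sphb] compact_sphere)
  then obtain M where M: "M > 0" "\<And>y. y \<in> f ` sphere 0 \<rho> \<Longrightarrow> norm y \<le> M"
    using compact_imp_bounded bounded_pos by metis
  have nsgn: "norm (sgn v) = 1" if "v \<noteq> 0" for v :: complex using that by (simp add: norm_sgn)
  have Mb: "norm (\<Psi> v) \<le> norm v * M" for v
  proof (cases "v = 0")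
    case True thus ?thesis unfolding \<Psi>_def by simp
  next
    case False
    have "norm (f (of_real \<rho> * sgn v)) \<le> M" using M(2) usph[OF nsgn[OF False]] by blast
    thus ?thesis unfolding \<Psi>_def by (simp add: norm_mult mult_left_mono)
  qed
  have \<Psi>0: "\<Psi> 0 = 0" unfolding \<Psi>_def by simp
  have \<Psi>s: "\<Psi> u = f (of_real \<rho> * u)" if "norm u = 1" for u
    unfolding \<Psi>_def using that by (simp add: sgn_eq)
  have \<Psi>c: "\<Psi> (of_real c * v) = of_real c * \<Psi> v" if "c > 0" for c v
  proof -
    have "sgn (complex_of_real c) = 1" using that by (simp add: sgn_eq)
    hence "sgn (of_real c * v) = sgn v" by (simp add: sgn_mult)
    thus ?thesis unfolding \<Psi>_def using that by (simp add: norm_mult)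
  qed
  have inj\<Psi>: "inj \<Psi>"
  proof (rule injI)
    fix v w assume e: "\<Psi> v = \<Psi> w"
    have z: "\<Psi> x = 0 \<longleftrightarrow> x = 0" for x
    proof (cases "x = 0")
      case False thus ?thesis unfolding \<Psi>_def using fnz[OF nsgn[OF False]] by simp
    qed (simp add: \<Psi>0)
    show "v = w"
    proof (cases "v = 0 \<or> w = 0")
      case True thus ?thesis using e z by metis
    next
      case False
      hence v0: "v \<noteq> 0" and w0: "w \<noteq> 0" by auto
      have sg: "sgn (\<Psi> x) = sgn (f (of_real \<rho> * sgn x))" if "x \<noteq> 0" for x
      proof -
        have "sgn (complex_of_real (norm x)) = 1" using that by (simp add: sgn_eq)
        thus ?thesis unfolding \<Psi>_def by (simp add: sgn_mult)
      qed
      have "sgn (f (of_real \<rho> * sgn v)) = sgn (f (of_real \<rho> * sgn w))" using e sg v0 w0 by metis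
      hence eqsgn: "sgn (s (of_real \<rho> * sgn v) + cnj (t (of_real \<rho> * sgn v))) = sgn (s (of_real \<rho> * sgn w) + cnj (t (of_real \<rho> * sgn w)))"
        unfolding f_def .
      have ss: "sgn v = sgn w"
        by (rule arg_inj[OF hs ht r _ nsgn[OF v0] nsgn[OF w0] eqsgn]) (rule pos)
      have "norm (\<Psi> v) = norm v * norm (f (of_real \<rho> * sgn v))"
           "norm (\<Psi> w) = norm w * norm (f (of_real \<rho> * sgn v))"
        unfolding \<Psi>_def ss by (simp_all add: norm_mult)
      hence "norm v = norm w" using e fnz[OF nsgn[OF v0]] by simp
      thus "v = w" using ss by (metis sgn_eq mult.commute nonzero_mult_div_cancel_left v0 w0
          norm_eq_zero of_real_eq_0_iff divide_eq_eq)
    qed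
  qed
  have cont\<Psi>: "continuous_on UNIV \<Psi>"
  proof (intro continuous_at_imp_continuous_on ballI)
    fix v :: complex assume "v \<in> UNIV"
    show "isCont \<Psi> v"
    proof (cases "v = 0")
      case True
      have "((\<lambda>x. norm x * M) \<longlongrightarrow> 0) (at (0::complex))"
        by (intro tendsto_mult_left_zero tendsto_norm_zero tendsto_ident_at)
      hence "(\<Psi> \<longlongrightarrow> 0) (at 0)" by (intro Lim_null_comparison[of \<Psi> "\<lambda>x. norm x * M"]) (auto simp: Mb)
      thus ?thesis using True \<Psi>0 by (simp add: isCont_def)
    next
      case False
      have "isCont f (of_real \<rho> * sgn v)"
        using contf usph[OF nsgn[OF False]] sphb by (auto simp: continuous_on_eq_continuous_at)
      moreover have "isCont (\<lambda>x. of_real \<rho> * sgn x) v" using False by (intro continuous_intros) auto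
      ultimately have "isCont (\<lambda>x. f (of_real \<rho> * sgn x)) v" by (rule isCont_o2[rotated])
      thus ?thesis unfolding \<Psi>_def[abs_def] by (intro continuous_intros)
    qed
  qed
  define D where "D = \<Psi> ` ball 0 1"
  have openD: "open D" unfolding D_def
    by (rule invariance_of_domain_ball[OF continuous_on_subset[OF cont\<Psi>] zero_less_one])
       (auto intro: inj_on_subset[OF inj\<Psi>])
  have connD: "connected D" unfolding D_def
    by (rule connected_continuous_image[OF continuous_on_subset[OF cont\<Psi>] connected_ball]) auto
  have compK: "compact (\<Psi> ` cball 0 1)"
    by (rule compact_continuous_image[OF continuous_on_subset[OF cont\<Psi>] compact_cball]) auto
  have DK: "D \<subseteq> \<Psi> ` cball 0 1" unfolding D_def by (rule image_mono[OF ball_subset_cball])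
  have bndD: "bounded D" by (rule bounded_subset[OF compact_imp_bounded[OF compK] DK])
  have clD: "closure D = \<Psi> ` cball 0 1"
  proof
    show "closure D \<subseteq> \<Psi> ` cball 0 1" by (rule closure_minimal[OF DK compact_imp_closed[OF compK]])
    have "\<Psi> ` closure (ball 0 1) \<subseteq> closure D"
      by (rule image_closure_subset[OF continuous_on_subset[OF cont\<Psi>] closed_closure])
         (auto simp: D_def intro: closure_subset[THEN subsetD])
    thus "\<Psi> ` cball 0 1 \<subseteq> closure D" by simp
  qed
  have "frontier D = \<Psi> ` cball 0 1 - \<Psi> ` ball 0 1"
    unfolding frontier_def clD interior_open[OF openD] by (simp add: D_def)
  also have "\<dots> = \<Psi> ` (cball 0 1 - ball 0 1)" by (rule image_set_diff[OF inj\<Psi>, symmetric])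
  also have "cball 0 1 - ball 0 1 = sphere (0::complex) 1" by auto
  also have "\<Psi> ` sphere 0 1 = f ` sphere 0 \<rho>"
  proof
    show "\<Psi> ` sphere 0 1 \<subseteq> f ` sphere 0 \<rho>"
    proof
      fix y assume "y \<in> \<Psi> ` sphere 0 1"
      then obtain u where u: "norm u = 1" "y = \<Psi> u" by auto
      thus "y \<in> f ` sphere 0 \<rho>" using \<Psi>s[OF u(1)] usph[OF u(1)] by auto
    qed
    show "f ` sphere 0 \<rho> \<subseteq> \<Psi> ` sphere 0 1"
    proof
      fix y assume "y \<in> f ` sphere 0 \<rho>"
      then obtain z where z: "norm z = \<rho>" "y = f z" by auto
      define u where "u = z / of_real \<rho>"
      have nu: "norm u = 1" unfolding u_def using z r by (simp add: norm_divide)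
      have "of_real \<rho> * u = z" unfolding u_def using r by simp
      hence "y = \<Psi> u" using \<Psi>s[OF nu] z by simp
      thus "y \<in> \<Psi> ` sphere 0 1" using nu by auto
    qed
  qed
  finally have frD: "frontier D = f ` sphere 0 \<rho>" .
  have D0: "0 \<in> D" unfolding D_def using \<Psi>0 by (metis centre_in_ball image_eqI zero_less_one)
  have starD: "closed_segment 0 w \<subseteq> D" if wD: "w \<in> D" for w
  proof
    fix x assume "x \<in> closed_segment 0 w"
    then obtain c where c: "0 \<le> c" "c \<le> 1" "x = of_real c * w"
      by (auto simp: closed_segment_def scaleR_conv_of_real)
    obtain v where v: "norm v < 1" "w = \<Psi> v" using wD unfolding D_def by auto
    show "x \<in> D"
    proof (cases "c = 0")
      case True thus ?thesis using D0 c by simp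
    next
      case False
      hence "c > 0" using c by simp
      hence "x = \<Psi> (of_real c * v)" using \<Psi>c c v by simp
      moreover have "norm (of_real c * v) < 1"
      proof -
        have "norm (complex_of_real c * v) = c * norm v" using c by (simp add: norm_mult)
        also have "\<dots> \<le> 1 * norm v" using c by (intro mult_right_mono) auto
        finally show ?thesis using v by simp
      qed
      ultimately show ?thesis unfolding D_def by auto
    qed
  qed
  have injf: "inj_on f (sphere 0 \<rho>)"
  proof (rule inj_onI)
    fix z1 z2 assume z: "z1 \<in> sphere 0 \<rho>" "z2 \<in> sphere 0 \<rho>" and e: "f z1 = f z2"
    have "\<Psi> (z / of_real \<rho>) = f z" if "z \<in> sphere 0 \<rho>" for z
    proof -
      have "norm (z / of_real \<rho>) = 1" using that r by (simp add: norm_divide)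
      moreover have "of_real \<rho> * (z / of_real \<rho>) = z" using r by simp
      ultimately show ?thesis using \<Psi>s by metis
    qed
    hence "\<Psi> (z1 / of_real \<rho>) = \<Psi> (z2 / of_real \<rho>)" using z e by simp
    hence "z1 / of_real \<rho> = z2 / of_real \<rho>" using inj\<Psi> by (simp add: inj_eq)
    thus "z1 = z2" using r by simp
  qed
  show ?thesis unfolding f_def[symmetric]
    using injf openD connD bndD frD D0 starD by blast
qed

theorem theorem22:
  fixes \<gamma> \<delta> lam :: real and s t :: "complex \<Rightarrow> complex" and ps :: "real \<Rightarrow> real"
  assumes "0 \<le> lam" "lam < \<gamma>" "\<gamma> \<le> \<delta>"
    and "in_RH0 \<gamma> \<delta> lam s t"
    and "\<And>r. ps r = (\<delta> + 2*\<gamma> - lam) * r^2 + (-2*\<delta> - 4*\<gamma> + 2*lam) * r + \<delta> + \<gamma>"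
  shows "(\<exists>!r. 0 < r \<and> r < 1 \<and> ps r = 0) \<and>
         (\<forall>r. 0 < r \<and> r < 1 \<and> ps r = 0 \<longrightarrow> fully_starlike_in (\<lambda>z. s z + cnj (t z)) r)"
proof -
  note p = assms(1-3)
  note RH = assms(4)
  define A where "A = \<delta> + 2 * \<gamma> - lam"
  define q where "q = (\<gamma> - lam) / A"
  have A0: "A > 0" unfolding A_def using p by simp
  have psA: "ps r = A * (1 - r)^2 - (\<gamma> - lam)" for r
    unfolding assms(5) A_def by (simp add: power2_eq_square algebra_simps)
  have q0: "0 < q" "q < 1" unfolding q_def using p A0 by (auto simp: A_def field_simps)
  have root_iff: "ps r = 0 \<longleftrightarrow> (1 - r)^2 = q" for r
    unfolding psA q_def using A0 by (auto simp: field_simps)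
  have uniq: "r = 1 - sqrt q" if "r < 1" "ps r = 0" for r
  proof -
    have "(1 - r)^2 = q" using that root_iff by simp
    hence "sqrt q = 1 - r" using that by (metis abs_of_pos diff_gt_0_iff_gt real_sqrt_abs)
    thus ?thesis by simp
  qed
  have ex: "0 < 1 - sqrt q \<and> 1 - sqrt q < 1 \<and> ps (1 - sqrt q) = 0"
  proof -
    have "sqrt q < 1" "0 < sqrt q" using q0 by auto
    moreover have "(1 - (1 - sqrt q))^2 = q" using q0 by simp
    ultimately show ?thesis using root_iff by simp
  qed
  have part1: "\<exists>!r. 0 < r \<and> r < 1 \<and> ps r = 0"
    using ex uniq by blast
  have hs: "s holomorphic_on ball 0 1" and ht: "t holomorphic_on ball 0 1"
    and s0: "s 0 = 0" and t0: "t 0 = 0"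
    using RH unfolding in_RH0_def by auto
  have part2: "fully_starlike_in (\<lambda>z. s z + cnj (t z)) r" if r: "0 < r" "r < 1" "ps r = 0" for r
    unfolding fully_starlike_in_def
  proof (intro conjI allI impI)
    show "s 0 + cnj (t 0) = 0" using s0 t0 by simp
    fix \<rho> :: real assume \<rho>: "0 < \<rho> \<and> \<rho> < r"
    have r1: "\<rho> < 1" using \<rho> r by simp
    define C where "C = (\<gamma> - lam) / (\<gamma> + \<delta>)"
    have C0: "C > 0" unfolding C_def using p by simp
    have "(1 - r)^2 = q" using r root_iff by simp
    moreover have "(1 - r)^2 < (1 - \<rho>)^2" using \<rho> r by (intro power_strict_mono) auto
    ultimately have qlt: "q < (1 - \<rho>)^2" by simp
    have gd: "\<gamma> + \<delta> \<noteq> 0" using p by simp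
    have "1 + C = A / (\<gamma> + \<delta>)" unfolding C_def A_def using gd by (simp add: field_simps)
    hence "(1 + C) * q = A / (\<gamma> + \<delta>) * ((\<gamma> - lam) / A)" unfolding q_def by simp
    also have "\<dots> = C" unfolding C_def using A0 gd by simp
    finally have "(1 + C) * q = C" .
    hence "C < (1 + C) * (1 - \<rho>)^2" using qlt C0 by (metis mult_strict_left_mono add_pos_pos zero_less_one)
    hence cond: "C * (1 / (1 - \<rho>)^2 - 1) < 1" using r1 by (simp add: field_simps)
    have pos: "Re ((s z + cnj (t z)) / z) > 0 \<and> Re ((z * deriv s z - cnj (z * deriv t z)) / (s z + cnj (t z))) > 0"
      if "norm z = \<rho>" for z
      by (rule est[OF p RH _ r1 cond[unfolded C_def] that]) (use \<rho> in simp)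
    have G: "inj_on (\<lambda>z. s z + cnj (t z)) (sphere 0 \<rho>) \<and>
        (\<exists>D. open D \<and> connected D \<and> bounded D \<and> frontier D = (\<lambda>z. s z + cnj (t z)) ` sphere 0 \<rho> \<and>
             0 \<in> D \<and> (\<forall>w\<in>D. closed_segment 0 w \<subseteq> D))"
      by (rule geom[OF hs ht _ r1 pos]) (use \<rho> in simp)
    show "inj_on (\<lambda>z. s z + cnj (t z)) (sphere 0 \<rho>)" using G by blast
    show "\<exists>D. open D \<and> connected D \<and> bounded D \<and> frontier D = (\<lambda>z. s z + cnj (t z)) ` sphere 0 \<rho> \<and>
             0 \<in> D \<and> (\<forall>w\<in>D. closed_segment 0 w \<subseteq> D)" using G by blast
  qed
  show ?thesis using part1 part2 by blast
qed

end
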